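(* Let $X \subseteq \omega$ and let $\mathcal{A}$ be a pca with a strongly $X$-effectively pca-valued partial numbering $\gamma$. Then $\mathcal{A}$ is embeddable in $\mathcal{K}_2^X$ and hence in $\mathcal{K}_2$.
   Context: A pca is a set with a partial binary application operation containing distinct $\mathrm{s},\mathrm{k}$ with $\mathrm{k}ab\downarrow=a$, $\mathrm{s}ab\downarrow$, $\mathrm{s}abc\simeq(ac)(bc)$. An embedding of pcas is an injective map $f$ with: if $ab$ is defined then $f(a)f(b)$ is defined and equals $f(ab)$. A partial numbering of a set $S$ is a surjective partial function $\gamma:\omega\rightharpoonup S$. For a pca $\mathcal{A}$, $\gamma$ is $X$-effectively pca-valued if there is a partial $X$-computable $\psi:\omega^2\rightharpoonup\omega$ such that for all $n,m\in\mathrm{dom}(\gamma)$, if $\gamma(n)\gamma(m)$ is defined then $\gamma(\psi(n,m))=\gamma(n)\gamma(m)$. It is strongly $X$-effectively pca-valued if such a $\psi$ can be chosen so that moreover, for all $n,m,k,l\in\mathrm{dom}(\gamma)$, if $\gamma(n)\gamma(m)$ and $\gamma(k)\gamma(l)$ are both defined and equal then $\psi(n,m)=\psi(k,l)$. $\mathcal{K}_2$: elements are all total functions $g:\omega\to\omega$, with $g\cdot h$ the function $n\mapsto\Phi^{g\oplus h}_{g(0)}(n)$ ($\Phi_e$ the $e$-th Turing functional, $(g\oplus h)(2n)=g(n)$, $(g\oplus h)(2n+1)=h(n)$), defined iff this function is total; $\mathcal{K}_2^X$ is the sub-pca of $X$-computable functions. *)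

theory Defs
  imports Main "HOL-Library.Nat_Bijection"
begin

datatype rf = Zr | Sc | Idf | Fstf | Sndf | Orc | Comp rf rf | Pairf rf rf | Prim rf rf | Mu rf

inductive eval :: "(nat \<Rightarrow> nat) \<Rightarrow> rf \<Rightarrow> nat \<Rightarrow> nat \<Rightarrow> bool" for f where
  ev_Zr: "eval f Zr x 0"
| ev_Sc: "eval f Sc x (Suc x)"
| ev_Idf: "eval f Idf x x"
| ev_Fst: "eval f Fstf x (fst (prod_decode x))"
| ev_Snd: "eval f Sndf x (snd (prod_decode x))"
| ev_Orc: "eval f Orc x (f x)"
| ev_Comp: "eval f q x y \<Longrightarrow> eval f p y z \<Longrightarrow> eval f (Comp p q) x z"
| ev_Pair: "eval f p x a \<Longrightarrow> eval f q x b \<Longrightarrow> eval f (Pairf p q) x (prod_encode (a, b))"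
| ev_Prim0: "eval f p y z \<Longrightarrow> eval f (Prim p q) (prod_encode (0, y)) z"
| ev_PrimS: "eval f (Prim p q) (prod_encode (n, y)) r \<Longrightarrow>
     eval f q (prod_encode (n, prod_encode (y, r))) z \<Longrightarrow>
     eval f (Prim p q) (prod_encode (Suc n, y)) z"
| ev_Mu: "eval f p (prod_encode (x, n)) 0 \<Longrightarrow>
     (\<forall>i<n. \<exists>v. v \<noteq> 0 \<and> eval f p (prod_encode (x, i)) v) \<Longrightarrow>
     eval f (Mu p) x n"

fun code :: "rf \<Rightarrow> nat" where
  "code Zr = prod_encode (0, 0)"
| "code Sc = prod_encode (1, 0)"
| "code Idf = prod_encode (2, 0)"
| "code Fstf = prod_encode (3, 0)"
| "code Sndf = prod_encode (4, 0)"
| "code Orc = prod_encode (5, 0)"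
| "code (Comp p q) = prod_encode (6, prod_encode (code p, code q))"
| "code (Pairf p q) = prod_encode (7, prod_encode (code p, code q))"
| "code (Prim p q) = prod_encode (8, prod_encode (code p, code q))"
| "code (Mu p) = prod_encode (9, code p)"

text \<open>Phi e f n v: the e-th Turing functional with oracle f on input n converges to v
  (numbers that code no program give the nowhere defined functional).\<close>
definition Phi :: "nat \<Rightarrow> (nat \<Rightarrow> nat) \<Rightarrow> nat \<Rightarrow> nat \<Rightarrow> bool" where
  "Phi e f n v \<longleftrightarrow> (\<exists>p. code p = e \<and> eval f p n v)"

definition chi :: "nat set \<Rightarrow> nat \<Rightarrow> nat" where
  "chi X n = (if n \<in> X then 1 else 0)"

definition X_computable :: "nat set \<Rightarrow> (nat \<Rightarrow> nat) \<Rightarrow> bool" where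
  "X_computable X g \<longleftrightarrow> (\<exists>e. \<forall>n. Phi e (chi X) n (g n))"

definition partial_X_computable2 :: "nat set \<Rightarrow> (nat \<Rightarrow> nat \<Rightarrow> nat option) \<Rightarrow> bool" where
  "partial_X_computable2 X \<psi> \<longleftrightarrow>
     (\<exists>e. \<forall>n m v. \<psi> n m = Some v \<longleftrightarrow> Phi e (chi X) (prod_encode (n, m)) v)"

definition papp :: "('a \<Rightarrow> 'a \<Rightarrow> 'a option) \<Rightarrow> 'a option \<Rightarrow> 'a option \<Rightarrow> 'a option" where
  "papp app x y = Option.bind x (\<lambda>a. Option.bind y (\<lambda>b. app a b))"

definition pca :: "('a \<Rightarrow> 'a \<Rightarrow> 'a option) \<Rightarrow> bool" where
  "pca app \<longleftrightarrow> (\<exists>s k. s \<noteq> k \<and>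
     (\<forall>a b. papp app (app k a) (Some b) = Some a) \<and>
     (\<forall>a b. papp app (app s a) (Some b) \<noteq> None) \<and>
     (\<forall>a b c. papp app (papp app (app s a) (Some b)) (Some c) = papp app (app a c) (app b c)))"

definition partial_numbering :: "(nat \<Rightarrow> 'a option) \<Rightarrow> bool" where
  "partial_numbering \<gamma> \<longleftrightarrow> (\<forall>a. \<exists>n. \<gamma> n = Some a)"

definition strongly_eff_pca_valued ::
  "nat set \<Rightarrow> ('a \<Rightarrow> 'a \<Rightarrow> 'a option) \<Rightarrow> (nat \<Rightarrow> 'a option) \<Rightarrow> bool" where
  "strongly_eff_pca_valued X app \<gamma> \<longleftrightarrow> (\<exists>\<psi>. partial_X_computable2 X \<psi> \<and>
     (\<forall>n m a b c. \<gamma> n = Some a \<longrightarrow> \<gamma> m = Some b \<longrightarrow> app a b = Some c \<longrightarrow>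
        (\<exists>r. \<psi> n m = Some r \<and> \<gamma> r = Some c)) \<and>
     (\<forall>n m k l a b a' b' c. \<gamma> n = Some a \<longrightarrow> \<gamma> m = Some b \<longrightarrow>
        \<gamma> k = Some a' \<longrightarrow> \<gamma> l = Some b' \<longrightarrow>
        app a b = Some c \<longrightarrow> app a' b' = Some c \<longrightarrow> \<psi> n m = \<psi> k l))"

definition join :: "(nat \<Rightarrow> nat) \<Rightarrow> (nat \<Rightarrow> nat) \<Rightarrow> nat \<Rightarrow> nat" where
  "join g h n = (if even n then g (n div 2) else h (n div 2))"

definition K2_app :: "(nat \<Rightarrow> nat) \<Rightarrow> (nat \<Rightarrow> nat) \<Rightarrow> (nat \<Rightarrow> nat) option" where
  "K2_app g h = (if \<forall>n. \<exists>v. Phi (g 0) (join g h) n v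
                 then Some (\<lambda>n. THE v. Phi (g 0) (join g h) n v) else None)"

definition embedding_K2 :: "('a \<Rightarrow> 'a \<Rightarrow> 'a option) \<Rightarrow> ('a \<Rightarrow> nat \<Rightarrow> nat) \<Rightarrow> bool" where
  "embedding_K2 app f \<longleftrightarrow> inj f \<and>
     (\<forall>a b c. app a b = Some c \<longrightarrow> K2_app (f a) (f b) = Some (f c))"

definition embedding_K2X :: "nat set \<Rightarrow> ('a \<Rightarrow> 'a \<Rightarrow> 'a option) \<Rightarrow> ('a \<Rightarrow> nat \<Rightarrow> nat) \<Rightarrow> bool" where
  "embedding_K2X X app f \<longleftrightarrow> (\<forall>a. X_computable X (f a)) \<and> embedding_K2 app f"

end

theory Submission
  imports Defs
begin

lemma eval_det: "eval g p x v \<Longrightarrow> eval g p x w \<Longrightarrow> v = w"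
proof (induction arbitrary: w rule: eval.induct)
  case (ev_Comp q x y p z)
  from ev_Comp.prems show ?case
    by (cases rule: eval.cases) (auto dest: ev_Comp.IH)
next
  case (ev_Pair p x a q b)
  from ev_Pair.prems show ?case
    by (cases rule: eval.cases) (auto dest: ev_Pair.IH)
next
  case (ev_Prim0 p y z q)
  from ev_Prim0.prems show ?case
    by (cases rule: eval.cases) (auto simp: prod_encode_eq dest: ev_Prim0.IH)
next
  case (ev_PrimS p q n y r z)
  from ev_PrimS.prems show ?case
    by (cases rule: eval.cases) (auto simp: prod_encode_eq dest: ev_PrimS.IH)
next
  case (ev_Mu p x n)
  from ev_Mu.prems obtain n' where w: "w = n'" and h0: "eval g p (prod_encode (x, n')) 0"
    and hlt: "\<forall>i<n'. \<exists>v. v \<noteq> 0 \<and> eval g p (prod_encode (x, i)) v"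
    by (cases rule: eval.cases) auto
  show ?case
  proof (rule ccontr)
    assume "n \<noteq> w"
    then consider "n < n'" | "n' < n" using w by linarith
    then show False
    proof cases
      case 1
      then obtain v where "v \<noteq> 0" "eval g p (prod_encode (x, n)) v" using hlt by blast
      then show False using ev_Mu.IH(1) by force
    next
      case 2
      then obtain v where "v \<noteq> 0" "\<forall>w. eval g p (prod_encode (x, n')) w \<longrightarrow> v = w"
        using ev_Mu.IH(2) by blast
      then show False using h0 by force
    qed
  qed
qed (auto elim: eval.cases)

lemma code_inj: "code p = code q \<Longrightarrow> p = q"
  by (induction p arbitrary: q) (case_tac q; simp add: prod_encode_eq)+

fun subst :: "rf \<Rightarrow> rf \<Rightarrow> rf" where
  "subst T Orc = T"
| "subst T (Comp p q) = Comp (subst T p) (subst T q)"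
| "subst T (Pairf p q) = Pairf (subst T p) (subst T q)"
| "subst T (Prim p q) = Prim (subst T p) (subst T q)"
| "subst T (Mu p) = Mu (subst T p)"
| "subst T p = p"

lemma eval_subst:
  assumes "eval h p x v" and "\<And>y. eval g T y (h y)"
  shows "eval g (subst T p) x v"
  using assms(1)
proof (induction rule: eval.induct)
  case (ev_Orc x)
  then show ?case using assms(2) by (auto intro: eval.intros)
next
  case (ev_Mu p x n)
  then show ?case by (auto intro!: eval.ev_Mu)
qed (auto intro: eval.intros)

fun const :: "nat \<Rightarrow> rf" where
  "const 0 = Zr"
| "const (Suc k) = Comp Sc (const k)"

lemma eval_const: "eval g (const k) x k"
  by (induction k) (auto intro: eval.intros)

lemma eval_Fst: "eval g Fstf (prod_encode (a, b)) a"
  using eval.ev_Fst[of g "prod_encode (a, b)"] by simp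

lemma eval_Snd: "eval g Sndf (prod_encode (a, b)) b"
  using eval.ev_Snd[of g "prod_encode (a, b)"] by simp

definition addP :: rf where "addP = Prim Idf (Comp Sc (Comp Sndf Sndf))"

lemma eval_add: "eval g addP (prod_encode (n, y)) (n + y)"
proof (induction n)
  case 0
  then show ?case unfolding addP_def by (auto intro: eval.intros)
next
  case (Suc n)
  have "eval g (Comp Sc (Comp Sndf Sndf)) (prod_encode (n, prod_encode (y, n + y))) (Suc (n + y))"
    by (meson eval.ev_Comp eval.ev_Sc eval_Snd)
  then show ?case using Suc unfolding addP_def by (auto intro: eval.ev_PrimS)
qed

definition dbl :: rf where "dbl = Comp addP (Pairf Idf Idf)"

lemma eval_dbl: "eval g dbl x (2 * x)"
  unfolding dbl_def using eval_add[of g x x]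
  by (metis eval.ev_Comp eval.ev_Idf eval.ev_Pair mult_2)

lemma eval_Prim_ex:
  assumes "eval g p y z0" and "\<And>x. \<exists>z. eval g q x z"
  shows "\<exists>r. eval g (Prim p q) (prod_encode (n, y)) r"
proof (induction n)
  case 0
  then show ?case using assms(1) by (auto intro: eval.intros)
next
  case (Suc n)
  then obtain r where "eval g (Prim p q) (prod_encode (n, y)) r" by blast
  moreover obtain z where "eval g q (prod_encode (n, prod_encode (y, r))) z" using assms(2) by blast
  ultimately show ?case by (auto intro: eval.ev_PrimS)
qed

lemma eval_eq: "eval g p x v \<Longrightarrow> v = w \<Longrightarrow> eval g p x w" by simp

lemma eval_diag: "eval g p (prod_encode (n, n)) v \<Longrightarrow> eval g (Comp p (Pairf Idf Idf)) n v"
  by (rule eval.ev_Comp[OF eval.ev_Pair[OF eval.ev_Idf eval.ev_Idf]])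

lemma eval_CompI: "eval g q x y \<Longrightarrow> eval g p y z \<Longrightarrow> eval g (Comp p q) x z"
  by (rule eval.ev_Comp)

lemma eval_Orc_at: "eval g q x y \<Longrightarrow> eval g (Comp Orc q) x (g y)"
  by (rule eval.ev_Comp[OF _ eval.ev_Orc])

theorem theorem6p1:
  fixes X :: "nat set" and app :: "'a \<Rightarrow> 'a \<Rightarrow> 'a option" and \<gamma> :: "nat \<Rightarrow> 'a option"
  assumes "pca app"
    and "partial_numbering \<gamma>"
    and "strongly_eff_pca_valued X app \<gamma>"
  shows "(\<exists>f. embedding_K2X X app f) \<and> (\<exists>f. embedding_K2 app f)"
proof -
  from assms(3) obtain \<psi> where pc: "partial_X_computable2 X \<psi>"
    and A: "\<forall>n m a b c. \<gamma> n = Some a \<longrightarrow> \<gamma> m = Some b \<longrightarrow> app a b = Some c \<longrightarrow>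
        (\<exists>r. \<psi> n m = Some r \<and> \<gamma> r = Some c)"
    and B: "\<forall>n m k l a b a' b' c. \<gamma> n = Some a \<longrightarrow> \<gamma> m = Some b \<longrightarrow>
        \<gamma> k = Some a' \<longrightarrow> \<gamma> l = Some b' \<longrightarrow>
        app a b = Some c \<longrightarrow> app a' b' = Some c \<longrightarrow> \<psi> n m = \<psi> k l"
    unfolding strongly_eff_pca_valued_def by blast
  from pc obtain e\<psi> where E: "\<And>n m v. \<psi> n m = Some v \<longleftrightarrow> Phi e\<psi> (chi X) (prod_encode (n, m)) v"
    unfolding partial_X_computable2_def by blast
  from assms(1) obtain kk where kprop: "\<And>a b. papp app (app kk a) (Some b) = Some a"
    unfolding pca_def by blast
  have kex: "\<exists>ka. app kk a = Some ka \<and> app ka a = Some a" for a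
    using kprop[of a a] unfolding papp_def by (cases "app kk a") auto
  have gs: "\<exists>n. \<gamma> n = Some a" for a using assms(2) unfolding partial_numbering_def by blast
  have "\<forall>a. \<exists>nm. \<exists>a1 b1. \<gamma> (fst nm) = Some a1 \<and> \<gamma> (snd nm) = Some b1 \<and> app a1 b1 = Some a"
  proof
    fix a
    obtain ka where "app kk a = Some ka" "app ka a = Some a" using kex by blast
    moreover obtain n where "\<gamma> n = Some ka" using gs by blast
    moreover obtain m where "\<gamma> m = Some a" using gs by blast
    ultimately show "\<exists>nm. \<exists>a1 b1. \<gamma> (fst nm) = Some a1 \<and> \<gamma> (snd nm) = Some b1 \<and> app a1 b1 = Some a"
      by (intro exI[of _ "(n, m)"]) auto
  qed
  then obtain NM where NM: "\<And>a. \<exists>a1 b1. \<gamma> (fst (NM a)) = Some a1 \<and> \<gamma> (snd (NM a)) = Some b1 \<and> app a1 b1 = Some a"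
    by metis
  define c where "c a = the (\<psi> (fst (NM a)) (snd (NM a)))" for a
  have cprop: "\<psi> (fst (NM a)) (snd (NM a)) = Some (c a) \<and> \<gamma> (c a) = Some a" for a
  proof -
    obtain a1 b1 where "\<gamma> (fst (NM a)) = Some a1" "\<gamma> (snd (NM a)) = Some b1" "app a1 b1 = Some a"
      using NM by blast
    then obtain r where "\<psi> (fst (NM a)) (snd (NM a)) = Some r" "\<gamma> r = Some a" using A by blast
    then show ?thesis unfolding c_def by simp
  qed
  have cmul: "\<psi> (c a) (c b) = Some (c d)" if ab: "app a b = Some d" for a b d
  proof -
    obtain a1 b1 where h: "\<gamma> (fst (NM d)) = Some a1" "\<gamma> (snd (NM d)) = Some b1" "app a1 b1 = Some d"
      using NM by blast
    have "\<psi> (c a) (c b) = \<psi> (fst (NM d)) (snd (NM d))"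
      using B cprop h ab by blast
    then show ?thesis using cprop by simp
  qed
  obtain ka where ka: "app kk undefined = Some ka" using kex by blast
  then have "Phi e\<psi> (chi X) (prod_encode (c kk, c undefined)) (c ka)" using cmul E by blast
  then obtain p\<psi> where cp: "code p\<psi> = e\<psi>" unfolding Phi_def by blast
  have psiev: "eval (chi X) p\<psi> (prod_encode (c a, c b)) (c d)" if "app a b = Some d" for a b d
  proof -
    have "Phi e\<psi> (chi X) (prod_encode (c a, c b)) (c d)" using cmul[OF that] E by blast
    then show ?thesis unfolding Phi_def using cp code_inj by blast
  qed
  define T where "T = Comp Sndf (Comp Orc (Comp Sc (Comp Sc dbl)))"
  define Psi' where "Psi' = subst T p\<psi>"
  define Q where "Q = Pairf (Comp Psi' (Pairf (Comp Fstf (Comp Orc (const 2))) (Comp Fstf (Comp Orc (const 3)))))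
     (Comp Sndf (Comp Orc (Comp dbl (Comp Fstf Sndf))))"
  define P where "P = Comp (Prim (Comp Orc Zr) Q) (Pairf Idf Idf)"
  define eP where "eP = code P"
  define f where "f a n = (if n = 0 then eP else prod_encode (c a, chi X (n - 1)))" for a n
  have Xc: "X_computable X (f a)" for a
  proof -
    define Pa where "Pa = Comp (Prim (const eP) (Pairf (const (c a)) (Comp Orc Fstf))) (Pairf Idf Idf)"
    have qv: "eval (chi X) (Pairf (const (c a)) (Comp Orc Fstf)) x (prod_encode (c a, chi X (fst (prod_decode x))))" for x
      by (rule eval.ev_Pair[OF eval_const eval_Orc_at[OF eval.ev_Fst]])
    have "eval (chi X) Pa n (f a n)" for n
    proof (cases n)
      case 0
      have "eval (chi X) (Prim (const eP) (Pairf (const (c a)) (Comp Orc Fstf))) (prod_encode (0, 0)) eP"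
        by (rule eval.ev_Prim0, rule eval_const)
      then show ?thesis unfolding Pa_def f_def using 0
        by (simp add: eval_diag)
    next
      case (Suc k)
      obtain r where r: "eval (chi X) (Prim (const eP) (Pairf (const (c a)) (Comp Orc Fstf))) (prod_encode (k, n)) r"
        using eval_Prim_ex[OF eval_const] qv by blast
      have "eval (chi X) (Prim (const eP) (Pairf (const (c a)) (Comp Orc Fstf))) (prod_encode (Suc k, n)) (f a n)"
        apply (rule eval.ev_PrimS[OF r])
        apply (rule eval_eq[OF qv])
        using Suc by (simp add: f_def)
      then show ?thesis unfolding Pa_def using Suc
        by (simp add: eval_diag)
    qed
    then show ?thesis unfolding X_computable_def Phi_def by blast
  qed
  have injf: "inj f"
  proof (rule injI)
    fix a b assume "f a = f b"
    then have "f a 1 = f b 1" by simp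
    then have "c a = c b" unfolding f_def by (simp add: prod_encode_eq)
    then show "a = b" using cprop by (metis option.inject)
  qed
  have K2: "K2_app (f a) (f b) = Some (f d)" if ab: "app a b = Some d" for a b d
  proof -
    define J where "J = join (f a) (f b)"
    have J2m: "J (2 * m) = f a m" for m unfolding J_def join_def by simp
    have J3: "J 3 = f b 1" unfolding J_def join_def by simp
    have Tv: "eval J T y (chi X y)" for y
    proof -
      have "eval J (Comp Orc (Comp Sc (Comp Sc dbl))) y (J (Suc (Suc (2 * y))))"
        by (rule eval_Orc_at[OF eval_CompI[OF eval_CompI[OF eval_dbl eval.ev_Sc] eval.ev_Sc]])
      moreover have "J (Suc (Suc (2 * y))) = prod_encode (c a, chi X y)"
        using J2m[of "Suc y"] by (simp add: f_def)
      ultimately show ?thesis unfolding T_def using eval_Snd eval_CompI by metis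
    qed
    have Pv: "eval J Psi' (prod_encode (c a, c b)) (c d)"
      unfolding Psi'_def by (rule eval_subst[OF psiev[OF ab] Tv])
    have f1: "eval J (Comp Fstf (Comp Orc (const 2))) x (c a)" for x
    proof -
      have "J 2 = prod_encode (c a, chi X 0)" using J2m[of 1] by (simp add: f_def)
      then have h: "eval J (Comp Orc (const 2)) x (prod_encode (c a, chi X 0))"
        using eval_Orc_at[OF eval_const, of J 2 x] by simp
      show ?thesis by (rule eval_CompI[OF h eval_Fst])
    qed
    have f2: "eval J (Comp Fstf (Comp Orc (const 3))) x (c b)" for x
    proof -
      have "J 3 = prod_encode (c b, chi X 0)" using J3 by (simp add: f_def)
      then have h: "eval J (Comp Orc (const 3)) x (prod_encode (c b, chi X 0))"
        using eval_Orc_at[OF eval_const, of J 3 x] by simp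
      show ?thesis by (rule eval_CompI[OF h eval_Fst])
    qed
    have Qv: "eval J Q x (prod_encode (c d, snd (prod_decode (J (2 * fst (prod_decode (snd (prod_decode x))))))))" for x
      unfolding Q_def
      by (rule eval.ev_Pair[OF eval_CompI[OF eval.ev_Pair[OF f1 f2] Pv]
           eval_CompI[OF eval_Orc_at[OF eval_CompI[OF eval_CompI[OF eval.ev_Snd eval.ev_Fst] eval_dbl]] eval.ev_Snd]])
    have Pev: "eval J P n (f d n)" for n
    proof (cases n)
      case 0
      have "eval J (Prim (Comp Orc Zr) Q) (prod_encode (0, 0)) (J 0)"
        by (rule eval.ev_Prim0[OF eval_Orc_at[OF eval.ev_Zr]])
      moreover have "J 0 = f d 0" using J2m[of 0] by (simp add: f_def)
      ultimately show ?thesis unfolding P_def using 0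
        by (simp add: eval_diag)
    next
      case (Suc k)
      obtain r where r: "eval J (Prim (Comp Orc Zr) Q) (prod_encode (k, n)) r"
        using eval_Prim_ex[OF eval.ev_Comp[OF eval.ev_Zr eval.ev_Orc]] Qv by blast
      have "eval J (Prim (Comp Orc Zr) Q) (prod_encode (Suc k, n)) (f d n)"
        apply (rule eval.ev_PrimS[OF r])
        apply (rule eval_eq[OF Qv])
        using Suc J2m[of n] by (simp add: f_def)
      then show ?thesis unfolding P_def using Suc
        by (simp add: eval_diag)
    qed
    have Ph: "Phi (f a 0) J n (f d n)" for n
    proof -
      have "f a 0 = code P" by (simp add: f_def eP_def)
      then show ?thesis unfolding Phi_def using Pev by auto
    qed
    have Pu: "Phi (f a 0) J n v \<Longrightarrow> v = f d n" for n v
    proof -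
      have "f a 0 = code P" by (simp add: f_def eP_def)
      then show "Phi (f a 0) J n v \<Longrightarrow> v = f d n"
        unfolding Phi_def using Pev code_inj eval_det by metis
    qed
    have "(\<lambda>n. THE v. Phi (f a 0) J n v) = f d"
      using Ph Pu by (intro ext the_equality) auto
    then show ?thesis unfolding K2_app_def J_def[symmetric] using Ph by auto
  qed
  have "embedding_K2X X app f"
    unfolding embedding_K2X_def embedding_K2_def using Xc injf K2 by blast
  then show ?thesis unfolding embedding_K2X_def by blast
qed

end
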